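(* Let $G$ be a finite simple graph with $G\in\mathcal{F}_2$. Then $crx_2(G)=3$ if and only if $G$ is a complete graph on at least $3$ vertices.
   Context: An edge-coloured cycle is rainbow if all its edges have distinct colours. For $k\ge 1$, $\mathcal{F}_k$ is the family of graphs in which any $k$ vertices lie on a common cycle. For $G\in\mathcal{F}_k$, a $k$-rainbow cycle colouring of $G$ is an edge-colouring such that any $k$ vertices of $G$ lie on a common rainbow cycle; $crx_k(G)$ is the minimum number of colours in a $k$-rainbow cycle colouring of $G$. *)

theory Defs
  imports Main
begin

definition simple_graph :: "'a set \<Rightarrow> 'a set set \<Rightarrow> bool" where
  "simple_graph V E \<longleftrightarrow> finite V \<and> (\<forall>e\<in>E. e \<subseteq> V \<and> card e = 2)"

definition complete_graph :: "'a set \<Rightarrow> 'a set set \<Rightarrow> bool" where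
  "complete_graph V E \<longleftrightarrow> E = {e. e \<subseteq> V \<and> card e = 2}"

definition is_cycle :: "'a set \<Rightarrow> 'a set set \<Rightarrow> 'a list \<Rightarrow> bool" where
  "is_cycle V E vs \<longleftrightarrow> distinct vs \<and> length vs \<ge> 3 \<and> set vs \<subseteq> V \<and>
     (\<forall>i < length vs. {vs ! i, vs ! ((i + 1) mod length vs)} \<in> E)"

definition cycle_edges :: "'a list \<Rightarrow> 'a set set" where
  "cycle_edges vs = {{vs ! i, vs ! ((i + 1) mod length vs)} | i. i < length vs}"

definition in_F :: "nat \<Rightarrow> 'a set \<Rightarrow> 'a set set \<Rightarrow> bool" where
  "in_F k V E \<longleftrightarrow> (\<forall>S \<subseteq> V. card S = k \<longrightarrow> (\<exists>vs. is_cycle V E vs \<and> S \<subseteq> set vs))"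

definition rainbow_cycle :: "'a set \<Rightarrow> 'a set set \<Rightarrow> ('a set \<Rightarrow> 'c) \<Rightarrow> 'a list \<Rightarrow> bool" where
  "rainbow_cycle V E c vs \<longleftrightarrow> is_cycle V E vs \<and> inj_on c (cycle_edges vs)"

definition k_rainbow_cycle_colouring ::
    "nat \<Rightarrow> 'a set \<Rightarrow> 'a set set \<Rightarrow> ('a set \<Rightarrow> 'c) \<Rightarrow> bool" where
  "k_rainbow_cycle_colouring k V E c \<longleftrightarrow>
     (\<forall>S \<subseteq> V. card S = k \<longrightarrow> (\<exists>vs. rainbow_cycle V E c vs \<and> S \<subseteq> set vs))"

definition crx :: "nat \<Rightarrow> 'a set \<Rightarrow> 'a set set \<Rightarrow> nat" where
  "crx k V E = (LEAST n. \<exists>c :: 'a set \<Rightarrow> nat.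
      k_rainbow_cycle_colouring k V E c \<and> card (c ` E) = n)"

end

theory Submission
  imports Defs
begin

lemma mod_suc_lt: "j < (L::nat) \<Longrightarrow> (j+1) mod L = (if j+1 = L then 0 else j+1)"
  by auto

lemma cycle_edges_img: "cycle_edges vs = (\<lambda>i. {vs ! i, vs ! ((i + 1) mod length vs)}) ` {..<length vs}"
  unfolding cycle_edges_def by auto

lemma card_cycle_edges:
  assumes "distinct vs" "length vs \<ge> 3"
  shows "card (cycle_edges vs) = length vs"
proof -
  let ?L = "length vs"
  have "inj_on (\<lambda>i. {vs ! i, vs ! ((i + 1) mod ?L)}) {..<?L}"
  proof (rule inj_onI)
    fix i j assume i: "i \<in> {..<?L}" and j: "j \<in> {..<?L}"
      and eq: "{vs ! i, vs ! ((i + 1) mod ?L)} = {vs ! j, vs ! ((j + 1) mod ?L)}"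
    have i1: "(i+1) mod ?L < ?L" and j1: "(j+1) mod ?L < ?L" using assms by (auto intro: mod_less_divisor)
    show "i = j"
    proof (rule ccontr)
      assume ne: "i \<noteq> j"
      have "vs ! i \<noteq> vs ! j" using ne i j assms(1) by (simp add: nth_eq_iff_index_eq)
      hence a: "vs ! i = vs ! ((j + 1) mod ?L)" and b: "vs ! ((i + 1) mod ?L) = vs ! j"
        using eq by (auto simp: doubleton_eq_iff)
      have "i = (j+1) mod ?L" using a i j1 assms(1) by (simp add: nth_eq_iff_index_eq)
      hence ii: "i = (if j+1 = ?L then 0 else j+1)" using mod_suc_lt[of j ?L] j by simp
      have "j = (i+1) mod ?L" using b j i1 assms(1) by (simp add: nth_eq_iff_index_eq)
      hence jj: "j = (if i+1 = ?L then 0 else i+1)" using mod_suc_lt[of i ?L] i by simp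
      show False
      proof (cases "j+1 = ?L")
        case True
        hence "i = 0" using ii by simp
        thus False using jj True assms(2) by (cases "i+1 = ?L") simp_all
      next
        case False
        hence "i = j+1" using ii by simp
        thus False using jj i assms(2) by (cases "i+1 = ?L") simp_all
      qed
    qed
  qed
  thus ?thesis unfolding cycle_edges_img by (simp add: card_image)
qed

lemma cycle_edges_sub: "is_cycle V E vs \<Longrightarrow> cycle_edges vs \<subseteq> E"
  unfolding is_cycle_def cycle_edges_def by auto

lemma lower_bound:
  assumes col: "k_rainbow_cycle_colouring 2 V E c" and fin: "finite E"
    and xy: "x \<in> V" "y \<in> V" "x \<noteq> y"
  shows "card (c ` E) \<ge> 3"
proof -
  have "{x,y} \<subseteq> V" "card {x,y} = 2" using xy by auto
  then obtain vs where r: "rainbow_cycle V E c vs" using col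
    unfolding k_rainbow_cycle_colouring_def by blast
  hence cyc: "is_cycle V E vs" and inj: "inj_on c (cycle_edges vs)"
    unfolding rainbow_cycle_def by auto
  have "card (c ` cycle_edges vs) = length vs"
    using inj cyc card_cycle_edges[of vs] by (simp add: card_image is_cycle_def)
  moreover have "card (c ` cycle_edges vs) \<le> card (c ` E)"
    using cycle_edges_sub[OF cyc] fin by (intro card_mono) auto
  ultimately show ?thesis using cyc unfolding is_cycle_def by linarith
qed

lemma exists_colouring:
  assumes "in_F 2 V E" "finite E"
  shows "\<exists>c :: 'a set \<Rightarrow> nat. k_rainbow_cycle_colouring 2 V E c"
proof -
  obtain f :: "'a set \<Rightarrow> nat" where f: "inj_on f E" using finite_imp_inj_to_nat_seg[OF assms(2)] by blast
  have "k_rainbow_cycle_colouring 2 V E f"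
    unfolding k_rainbow_cycle_colouring_def rainbow_cycle_def
  proof (intro allI impI)
    fix S assume "S \<subseteq> V" "card S = 2"
    then obtain vs where "is_cycle V E vs" "S \<subseteq> set vs" using assms(1) unfolding in_F_def by blast
    thus "\<exists>vs. (is_cycle V E vs \<and> inj_on f (cycle_edges vs)) \<and> S \<subseteq> set vs"
      using inj_on_subset[OF f cycle_edges_sub] by blast
  qed
  thus ?thesis by blast
qed


definition good :: "'a set \<Rightarrow> ('a set \<Rightarrow> nat) \<Rightarrow> bool" where
  "good V c \<longleftrightarrow> (\<forall>e. c e < 3) \<and> (\<forall>x\<in>V. \<forall>y\<in>V. x \<noteq> y \<longrightarrow>
     (\<exists>z\<in>V. z \<noteq> x \<and> z \<noteq> y \<and> c {x,y} \<noteq> c {y,z} \<and> c {y,z} \<noteq> c {z,x} \<and> c {x,y} \<noteq> c {z,x}))"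

lemma good_step:
  assumes g: "good R c" and a: "a \<notin> R" and b: "b \<notin> R" and ab: "a \<noteq> b" and R: "R \<noteq> {}"
    and cdef: "C = (\<lambda>e. if e = {a,b} then 1 else if a \<in> e then 2 else if b \<in> e then 0 else c e)"
  shows "good (insert a (insert b R)) C"
  unfolding good_def
proof (intro conjI ballI impI allI)
  fix e show "C e < 3" using g unfolding good_def cdef by auto
next
  fix x y assume x: "x \<in> insert a (insert b R)" and y: "y \<in> insert a (insert b R)" and xy: "x \<noteq> y"
  obtain r where r: "r \<in> R" using R by auto
  show "\<exists>z\<in>insert a (insert b R). z \<noteq> x \<and> z \<noteq> y \<and> C {x,y} \<noteq> C {y,z} \<and> C {y,z} \<noteq> C {z,x} \<and> C {x,y} \<noteq> C {z,x}"
  proof (cases "x \<in> R \<and> y \<in> R")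
    case True
    then obtain z where z: "z \<in> R" "z \<noteq> x" "z \<noteq> y" "c {x,y} \<noteq> c {y,z}" "c {y,z} \<noteq> c {z,x}" "c {x,y} \<noteq> c {z,x}"
      using g xy unfolding good_def by blast
    have "a \<noteq> x" "a \<noteq> y" "a \<noteq> z" "b \<noteq> x" "b \<noteq> y" "b \<noteq> z" using True z a b by auto
    then have e1: "C {x,y} = c {x,y}" and e2: "C {y,z} = c {y,z}" and e3: "C {z,x} = c {z,x}"
      unfolding cdef by (auto simp: doubleton_eq_iff)
    show ?thesis
    proof (rule bexI[of _ z])
      show "z \<in> insert a (insert b R)" using z by simp
      show "z \<noteq> x \<and> z \<noteq> y \<and> C {x,y} \<noteq> C {y,z} \<and> C {y,z} \<noteq> C {z,x} \<and> C {x,y} \<noteq> C {z,x}"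
        unfolding e1 e2 e3 using z by blast
    qed
  next
    case False
    have ab1: "C {a,b} = 1" "C {b,a} = 1" unfolding cdef by (auto simp: insert_commute)
    have ra: "C {a,t} = 2" "C {t,a} = 2" "C {b,t} = 0" "C {t,b} = 0" if "t \<in> R" for t
    proof -
      have "t \<noteq> a" "t \<noteq> b" using that a b by auto
      hence "{a,t} \<noteq> {a,b}" "{t,a} \<noteq> {a,b}" "{b,t} \<noteq> {a,b}" "{t,b} \<noteq> {a,b}" "a \<notin> {b,t}" "a \<notin> {t,b}"
        using ab by (auto simp: doubleton_eq_iff)
      thus "C {a,t} = 2" "C {t,a} = 2" "C {b,t} = 0" "C {t,b} = 0" unfolding cdef by auto
    qed
    have ar: "a \<noteq> r" "b \<noteq> r" using a b r by auto
    consider "x = a \<and> y = b" | "x = b \<and> y = a" | "x = a \<and> y \<in> R" | "y = a \<and> x \<in> R"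
      | "x = b \<and> y \<in> R" | "y = b \<and> x \<in> R" using x y xy False by auto
    thus ?thesis
    proof cases
      case 1 thus ?thesis using r ar ab ab1 ra[OF r] by (intro bexI[of _ r]) simp_all
    next
      case 2 thus ?thesis using r ar ab ab1 ra[OF r] by (intro bexI[of _ r]) simp_all
    next
      case 3 thus ?thesis using ab a b ab1 ra[of y] by (intro bexI[of _ b]) auto
    next
      case 4 thus ?thesis using ab a b ab1 ra[of x] by (intro bexI[of _ b]) auto
    next
      case 5 thus ?thesis using ab a b ab1 ra[of y] by (intro bexI[of _ a]) auto
    next
      case 6 thus ?thesis using ab a b ab1 ra[of x] by (intro bexI[of _ a]) auto
    qed
  qed
qed

lemma good_1: "good {r} (\<lambda>e. 0)"
  unfolding good_def by auto

lemma good_4: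
  assumes dist: "distinct [a,b,d,f]"
    and cdef: "C = (\<lambda>e. if e = {a,b} \<or> e = {d,f} then 0 else if e = {a,d} \<or> e = {b,f} then 1 else (2::nat))"
  shows "good {a,b,d,f} C"
proof -
  have t: "C {a,b} = 0" "C {b,a} = 0" "C {d,f} = 0" "C {f,d} = 0"
    "C {a,d} = 1" "C {d,a} = 1" "C {b,f} = 1" "C {f,b} = 1"
    "C {a,f} = 2" "C {f,a} = 2" "C {b,d} = 2" "C {d,b} = 2"
    using dist unfolding cdef by (auto simp: doubleton_eq_iff)
  have "C e < 3" for e unfolding cdef by auto
  moreover have "\<forall>x\<in>{a,b,d,f}. \<forall>y\<in>{a,b,d,f}. x \<noteq> y \<longrightarrow>
     (\<exists>z\<in>{a,b,d,f}. z \<noteq> x \<and> z \<noteq> y \<and> C {x,y} \<noteq> C {y,z} \<and> C {y,z} \<noteq> C {z,x} \<and> C {x,y} \<noteq> C {z,x})"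
    using dist by (simp add: t) blast
  ultimately show ?thesis unfolding good_def by blast
qed

lemma good_exists:
  "finite V \<Longrightarrow> card V = 1 \<or> card V \<ge> 3 \<Longrightarrow> \<exists>c. good V c"
proof (induction "card V" arbitrary: V rule: less_induct)
  case less
  show ?case
  proof (cases "card V = 1")
    case True
    then obtain r where "V = {r}" by (auto simp: card_Suc_eq)
    thus ?thesis using good_1[of r] by auto
  next
    case False
    hence c3: "card V \<ge> 3" using less.prems by auto
    then obtain a where a: "a \<in> V" by fastforce
    have "card (V - {a}) = card V - 1" using a less.prems by simp
    hence "card (V - {a}) \<ge> 2" using c3 by simp
    hence "V - {a} \<noteq> {}" by (metis card.empty not_numeral_le_zero)
    then obtain b where b: "b \<in> V - {a}" by blast
    define R where "R = V - {a} - {b}"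
    have cR: "card R = card V - 2" unfolding R_def using a b less.prems by auto
    have V: "V = insert a (insert b R)" unfolding R_def using a b by auto
    have aR: "a \<notin> R" "b \<notin> R" "a \<noteq> b" using b unfolding R_def by auto
    have fR: "finite R" using less.prems unfolding R_def by auto
    show ?thesis
    proof (cases "card V = 4")
      case True
      hence "card R = 2" using cR by simp
      then obtain d f where df: "R = {d,f}" "d \<noteq> f" by (auto simp: card_2_iff)
      have dd: "distinct [a,b,d,f]" using aR df by auto
      have VV: "V = {a,b,d,f}" using V df by auto
      show ?thesis unfolding VV by (rule exI, rule good_4[OF dd refl])
    next
      case False
      hence "card R = 1 \<or> card R \<ge> 3" using cR c3 by auto
      moreover have "card R < card V" using cR c3 by auto
      ultimately obtain c where g: "good R c" using less.hyps fR by blast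
      have "R \<noteq> {}" using cR c3 False by auto
      show ?thesis unfolding V by (rule exI, rule good_step[OF g aR(1,2,3) \<open>R \<noteq> {}\<close> refl])
    qed
  qed
qed

lemma cycle3_edges: "cycle_edges [x,y,z] = {{x,y},{y,z},{z,x}}"
proof -
  have "{..<length [x,y,z]} = {0,1,2::nat}" by auto
  thus ?thesis unfolding cycle_edges_img by simp
qed

lemma two_in: assumes "finite V" "card V \<ge> 3" obtains x y where "x \<in> V" "y \<in> V" "x \<noteq> y"
proof -
  obtain x where x: "x \<in> V" using assms by fastforce
  have "card (V - {x}) \<ge> 2" using assms x by simp
  hence "V - {x} \<noteq> {}" by (metis card.empty not_numeral_le_zero)
  then obtain y where "y \<in> V - {x}" by blast
  thus ?thesis using that x by blast
qed

theorem theorem3: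
  fixes V :: "'a set" and E :: "'a set set"
  assumes "simple_graph V E" and "in_F 2 V E"
  shows "crx 2 V E = 3 \<longleftrightarrow> (complete_graph V E \<and> card V \<ge> 3)"
proof -
  have fV: "finite V" and Esub: "\<forall>e\<in>E. e \<subseteq> V \<and> card e = 2"
    using assms(1) unfolding simple_graph_def by auto
  have fE: "finite E" using Esub fV by (meson PowI finite_Pow_iff finite_subset subsetI)
  obtain c0 :: "'a set \<Rightarrow> nat" where col0: "k_rainbow_cycle_colouring 2 V E c0"
    using exists_colouring[OF assms(2) fE] by blast
  have crxI: "\<exists>c :: 'a set \<Rightarrow> nat. k_rainbow_cycle_colouring 2 V E c \<and> card (c ` E) = crx 2 V E"
    unfolding crx_def by (rule LeastI_ex) (use col0 in blast)
  show ?thesis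
  proof
    assume h: "crx 2 V E = 3"
    then obtain c :: "'a set \<Rightarrow> nat" where col: "k_rainbow_cycle_colouring 2 V E c"
      and c3: "card (c ` E) = 3" using crxI by auto
    have adj: "{x,y} \<in> E \<and> card V \<ge> 3" if xy: "x \<in> V" "y \<in> V" "x \<noteq> y" for x y
    proof -
      have "{x,y} \<subseteq> V" "card {x,y} = 2" using xy by auto
      then obtain vs where r: "rainbow_cycle V E c vs" and sub: "{x,y} \<subseteq> set vs" using col
        unfolding k_rainbow_cycle_colouring_def by blast
      hence cyc: "is_cycle V E vs" and inj: "inj_on c (cycle_edges vs)"
        unfolding rainbow_cycle_def by auto
      have "card (c ` cycle_edges vs) = length vs"
        using inj cyc card_cycle_edges[of vs] by (simp add: card_image is_cycle_def)
      moreover have "card (c ` cycle_edges vs) \<le> card (c ` E)"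
        using cycle_edges_sub[OF cyc] fE by (intro card_mono) auto
      ultimately have len: "length vs = 3" using cyc c3 unfolding is_cycle_def by linarith
      then obtain p q r where vs: "vs = [p,q,r]" by (auto simp: length_Suc_conv numeral_3_eq_3)
      have ed: "\<forall>i<3. {vs ! i, vs ! ((i + 1) mod 3)} \<in> E" using cyc len unfolding is_cycle_def by auto
      have "{p,q} \<in> E" using ed[rule_format, of 0] vs by simp
      moreover have "{q,r} \<in> E" using ed[rule_format, of 1] vs by simp
      moreover have "{r,p} \<in> E" using ed[rule_format, of 2] vs by simp
      ultimately have e1: "{x,y} \<in> E" using sub xy(3) vs by (auto simp: insert_commute)
      have "card (set vs) = 3" using cyc len distinct_card unfolding is_cycle_def by metis
      moreover have "card (set vs) \<le> card V" using cyc fV unfolding is_cycle_def by (simp add: card_mono)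
      ultimately show ?thesis using e1 by simp
    qed
    have "E \<noteq> {}" using c3 by auto
    then obtain e where e: "e \<in> E" by blast
    then obtain x y where "e = {x,y}" "x \<noteq> y" using Esub by (metis card_2_iff)
    hence "x \<in> V" "y \<in> V" "x \<noteq> y" using e Esub by auto
    hence cV: "card V \<ge> 3" using adj by blast
    have "E = {e. e \<subseteq> V \<and> card e = 2}"
    proof
      show "E \<subseteq> {e. e \<subseteq> V \<and> card e = 2}" using Esub by auto
    next
      show "{e. e \<subseteq> V \<and> card e = 2} \<subseteq> E"
      proof
        fix e assume "e \<in> {e. e \<subseteq> V \<and> card e = 2}"
        then obtain x y where "e = {x,y}" "x \<noteq> y" "x \<in> V" "y \<in> V" by (auto simp: card_2_iff)
        thus "e \<in> E" using adj by blast
      qed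
    qed
    thus "complete_graph V E \<and> card V \<ge> 3" using cV unfolding complete_graph_def by blast
  next
    assume h: "complete_graph V E \<and> card V \<ge> 3"
    hence Eeq: "E = {e. e \<subseteq> V \<and> card e = 2}" and cV: "card V \<ge> 3"
      unfolding complete_graph_def by auto
    obtain c where g: "good V c" using good_exists[OF fV] cV by blast
    have col: "k_rainbow_cycle_colouring 2 V E c"
      unfolding k_rainbow_cycle_colouring_def
    proof (intro allI impI)
      fix S assume S: "S \<subseteq> V" "card S = 2"
      then obtain x y where xy: "S = {x,y}" "x \<noteq> y" by (auto simp: card_2_iff)
      hence xyV: "x \<in> V" "y \<in> V" using S by auto
      then obtain z where z: "z \<in> V" "z \<noteq> x" "z \<noteq> y" "c {x,y} \<noteq> c {y,z}" "c {y,z} \<noteq> c {z,x}" "c {x,y} \<noteq> c {z,x}"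
        using g xy unfolding good_def by blast
      have "is_cycle V E [x,y,z]"
        unfolding is_cycle_def
      proof (intro conjI allI impI)
        show "distinct [x,y,z]" using xy z by auto
        show "3 \<le> length [x,y,z]" by simp
        show "set [x,y,z] \<subseteq> V" using xyV z by auto
        fix i assume "i < length [x,y,z]"
        hence "i = 0 \<or> i = 1 \<or> i = 2" by auto
        thus "{[x,y,z] ! i, [x,y,z] ! ((i + 1) mod length [x,y,z])} \<in> E"
          using xyV z xy unfolding Eeq by auto
      qed
      moreover have "inj_on c (cycle_edges [x,y,z])"
        unfolding cycle3_edges inj_on_def using z by auto
      ultimately show "\<exists>vs. rainbow_cycle V E c vs \<and> S \<subseteq> set vs"
        unfolding rainbow_cycle_def using xy by (intro exI[of _ "[x,y,z]"]) auto
    qed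
    have cle: "card (c ` E) \<le> 3"
    proof -
      have "c ` E \<subseteq> {..<3}" using g unfolding good_def by auto
      thus ?thesis by (metis card_lessThan card_mono finite_lessThan)
    qed
    obtain x y where xy: "x \<in> V" "y \<in> V" "x \<noteq> y" using two_in[OF fV cV] by blast
    have "crx 2 V E \<le> card (c ` E)" unfolding crx_def
      by (rule Least_le) (use col in blast)
    moreover obtain c' :: "'a set \<Rightarrow> nat" where "k_rainbow_cycle_colouring 2 V E c'"
      "card (c' ` E) = crx 2 V E" using crxI by blast
    hence "crx 2 V E \<ge> 3" using lower_bound[OF _ fE xy] by metis
    ultimately show "crx 2 V E = 3" using cle by linarith
  qed
qed

end
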